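(* Fix $\alpha\in(0,1)$ and $\nu\in(0,\alpha)$. Assume $|\ell(f,z)|\le1$ for all $z$ and $f\in\mathcal F$. Define the data-dependent class $$\widehat{\mathcal F}^+_\nu=\left\{f\in\mathcal F: R_n(f,\mathcal D)\le R_n(\hat f,\mathcal D)+4\,\mathrm{Gap}_n(\mathcal F)+4\sqrt{\tfrac2n\log(1/\nu)}\right\}.$$ Then $$P\left\{R(\hat f,P)\le R_n(\hat f,\mathcal D)+\mathrm{Gap}_n(\widehat{\mathcal F}^+_\nu)+\sqrt{\tfrac2n\log\!\left(\tfrac1{\alpha-\nu}\right)}\right\}\ge1-\alpha.$$
   Context: $\mathcal D=\{z_i\}_{i=1}^n\sim P^n$ i.i.d.; $\mathcal F$ is a hypothesis class and $\ell(f,z)$ a loss. Empirical risk $R_n(f,\mathcal D)=\frac1n\sum_{i=1}^n\ell(f,z_i)$, population risk $R(f,P)=\mathbb E_{z\sim P}\ell(f,z)$, and $\hat f=\arg\min_{f\in\mathcal F}R_n(f,\mathcal D)$ (assumed to exist). $\mathrm{Gap}_n(\cdot)$ is a function on subclasses $\mathcal F'\subseteq\mathcal F$ such that for every fixed $\mathcal F'\subseteq\mathcal F$, $\mathrm{Gap}_n(\mathcal F')\ge\mathbb E\sup_{f\in\mathcal F'}|R(f,P)-R_n(f,\mathcal D)|$, and which is monotone: $\mathrm{Gap}_n(\mathcal F_1)\le\mathrm{Gap}_n(\mathcal F_2)$ whenever $\mathcal F_1\subseteq\mathcal F_2$ (e.g., twice the Rademacher complexity of $\{\ell(f,\cdot)\}_{f\in\mathcal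 F'}$). *)

theory Defs
  imports "HOL-Probability.Probability"
begin

definition emp_risk :: "nat \<Rightarrow> ('f \<Rightarrow> 'z \<Rightarrow> real) \<Rightarrow> 'f \<Rightarrow> (nat \<Rightarrow> 'z) \<Rightarrow> real" where
  "emp_risk n l f D = (\<Sum>i<n. l f (D i)) / real n"

definition pop_risk :: "'z measure \<Rightarrow> ('f \<Rightarrow> 'z \<Rightarrow> real) \<Rightarrow> 'f \<Rightarrow> real" where
  "pop_risk M l f = integral\<^sup>L M (l f)"

abbreviation sample_space :: "nat \<Rightarrow> 'z measure \<Rightarrow> (nat \<Rightarrow> 'z) measure" where
  "sample_space n M \<equiv> PiM {..<n} (\<lambda>_. M)"

text \<open>The data-dependent class F^+_nu (fh = the ERM on the sample D).\<close>
definition Fplus :: "nat \<Rightarrow> ('f \<Rightarrow> 'z \<Rightarrow> real) \<Rightarrow> 'f set \<Rightarrow> ('f set \<Rightarrow> real) \<Rightarrow> real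
    \<Rightarrow> 'f \<Rightarrow> (nat \<Rightarrow> 'z) \<Rightarrow> 'f set" where
  "Fplus n l F Gap \<nu> fh D = {f \<in> F. emp_risk n l f D \<le> emp_risk n l fh D + 4 * Gap F
      + 4 * sqrt (2 / real n * ln (1 / \<nu>))}"

end

theory Submission imports Defs begin

lemma upd_in_space:
  assumes "D \<in> space (PiM I (\<lambda>_. M))" "i \<in> I" "z \<in> space M"
  shows "D(i:=z) \<in> space (PiM I (\<lambda>_. M))"
  using assms by (auto simp: space_PiM PiE_def extensional_def)

lemma upd_in_space_insert:
  assumes "D \<in> space (PiM I (\<lambda>_. M))" "z \<in> space M"
  shows "D(i:=z) \<in> space (PiM (insert i I) (\<lambda>_. M))"
  using assms by (auto simp: space_PiM PiE_def extensional_def)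

lemma mcdiarmid_mgf:
  fixes M :: "'z measure" and c B l :: real
  assumes M: "prob_space M" and l: "l > 0"
  shows "g \<in> borel_measurable (PiM {..<n} (\<lambda>_. M)) \<Longrightarrow>
    (\<forall>D\<in>space (PiM {..<n} (\<lambda>_. M)). \<bar>g D\<bar> \<le> B) \<Longrightarrow>
    (\<forall>D\<in>space (PiM {..<n} (\<lambda>_. M)). \<forall>i<n. \<forall>z\<in>space M. \<bar>g (D(i:=z)) - g D\<bar> \<le> c) \<Longrightarrow>
    (\<integral>\<^sup>+D. ennreal (exp (l * (g D - (\<integral>D. g D \<partial>PiM {..<n} (\<lambda>_. M))))) \<partial>PiM {..<n} (\<lambda>_. M))
      \<le> ennreal (exp (l\<^sup>2 * real n * c\<^sup>2 / 8))"
proof (induction n arbitrary: g)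
  case 0
  show ?case
    by (simp add: PiM_empty lebesgue_integral_count_space_finite nn_integral_count_space_finite)
next
  case (Suc n)
  interpret PS: product_sigma_finite "\<lambda>_::nat. M"
    by (simp add: product_sigma_finite_def prob_space_imp_sigma_finite M)
  interpret Mp: prob_space M by (fact M)
  define P where "P = PiM {..<n} (\<lambda>_. M)"
  define Q where "Q = PiM (insert n {..<n}) (\<lambda>_. M)"
  have QS: "PiM {..<Suc n} (\<lambda>_. M) = Q" by (simp add: Q_def lessThan_Suc)
  interpret P: prob_space P unfolding P_def by (intro prob_space_PiM M)
  interpret Q: prob_space Q unfolding Q_def by (intro prob_space_PiM M)
  have gm[measurable]: "g \<in> borel_measurable Q" using Suc.prems(1) QS by simp
  have gB: "\<And>D. D \<in> space Q \<Longrightarrow> \<bar>g D\<bar> \<le> B" using Suc.prems(2) QS by simp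
  have gc: "\<And>D i z. D \<in> space Q \<Longrightarrow> i \<in> insert n {..<n} \<Longrightarrow> z \<in> space M \<Longrightarrow> \<bar>g (D(i:=z)) - g D\<bar> \<le> c"
  proof -
    fix D i z assume a: "D \<in> space Q" "i \<in> insert n {..<n}" "z \<in> space M"
    have "D \<in> space (PiM {..<Suc n} (\<lambda>_. M))" "i < Suc n" using a QS by auto
    then show "\<bar>g (D(i:=z)) - g D\<bar> \<le> c" using Suc.prems(3) a(3) by blast
  qed
  have ins: "\<And>D z. D \<in> space P \<Longrightarrow> z \<in> space M \<Longrightarrow> D(n:=z) \<in> space Q"
    unfolding P_def Q_def by (rule upd_in_space_insert)
  define h where "h D = (\<integral>z. g (D(n:=z)) \<partial>M)" for D
  have comp_meas: "\<And>D. D \<in> space P \<Longrightarrow> (\<lambda>z. g (D(n:=z))) \<in> borel_measurable M"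
  proof -
    fix D assume D: "D \<in> space P"
    have "(\<lambda>v. D(n:=v)) \<in> measurable M Q" unfolding Q_def
      by (rule measurable_component_update) (use D P_def in auto)
    from measurable_comp[OF this gm] show "(\<lambda>z. g (D(n:=z))) \<in> borel_measurable M" unfolding comp_def .
  qed
  have comp_int: "\<And>D. D \<in> space P \<Longrightarrow> integrable M (\<lambda>z. g (D(n:=z)))"
    by (rule Mp.integrable_const_bound[where B=B]) (auto intro!: AE_I2 comp_meas gB ins)
  have pair_meas: "(\<lambda>(D,z). g (D(n:=z))) \<in> borel_measurable (P \<Otimes>\<^sub>M M)"
  proof -
    have "(\<lambda>x. (fst x)(n := snd x)) \<in> measurable (P \<Otimes>\<^sub>M M) Q"
      unfolding P_def Q_def by (rule measurable_fun_upd[where J="{..<n}"]) auto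
    from measurable_comp[OF this gm] show ?thesis by (simp add: comp_def case_prod_beta)
  qed
  have hm[measurable]: "h \<in> borel_measurable P"
    unfolding h_def using sigma_finite_measure.borel_measurable_lebesgue_integral[OF prob_space_imp_sigma_finite[OF M], of "\<lambda>D z. g (D(n:=z))" P] pair_meas by simp
  have hB: "\<forall>D\<in>space P. \<bar>h D\<bar> \<le> B"
  proof
    fix D assume D: "D \<in> space P"
    have "h D \<le> B" unfolding h_def
      by (rule Mp.integral_le_const[OF comp_int[OF D]]) (auto intro!: AE_I2 dest: gB[OF ins[OF D]])
    moreover have "-B \<le> h D" unfolding h_def
      by (rule Mp.integral_ge_const[OF comp_int[OF D]]) (auto intro!: AE_I2 dest: gB[OF ins[OF D]])
    ultimately show "\<bar>h D\<bar> \<le> B" by simp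
  qed
  have hc: "\<forall>D\<in>space P. \<forall>i<n. \<forall>w\<in>space M. \<bar>h (D(i:=w)) - h D\<bar> \<le> c"
  proof (intro ballI allI impI)
    fix D i w assume D: "D \<in> space P" and i: "i < n" and w: "w \<in> space M"
    have Dw: "D(i:=w) \<in> space P" unfolding P_def using D i w unfolding P_def by (intro upd_in_space) auto
    have eq: "h (D(i:=w)) - h D = (\<integral>z. g ((D(n:=z))(i:=w)) - g (D(n:=z)) \<partial>M)"
      unfolding h_def using i
      by (subst Bochner_Integration.integral_diff[OF comp_int[OF Dw] comp_int[OF D], symmetric])
         (simp add: fun_upd_twist)
    have pw: "\<And>z. z \<in> space M \<Longrightarrow> \<bar>g ((D(n:=z))(i:=w)) - g (D(n:=z))\<bar> \<le> c"
      using gc ins[OF D] i w by auto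
    have int: "integrable M (\<lambda>z. g ((D(n:=z))(i:=w)) - g (D(n:=z)))"
      using Bochner_Integration.integrable_diff[OF comp_int[OF Dw] comp_int[OF D]] i
      by (simp add: fun_upd_twist)
    have "(\<integral>z. g ((D(n:=z))(i:=w)) - g (D(n:=z)) \<partial>M) \<le> c"
      by (rule Mp.integral_le_const[OF int]) (auto intro!: AE_I2 dest: pw)
    moreover have "-c \<le> (\<integral>z. g ((D(n:=z))(i:=w)) - g (D(n:=z)) \<partial>M)"
      by (rule Mp.integral_ge_const[OF int]) (auto intro!: AE_I2 dest: pw)
    ultimately show "\<bar>h (D(i:=w)) - h D\<bar> \<le> c" using eq by simp
  qed
  have IH: "(\<integral>\<^sup>+D. ennreal (exp (l * (h D - (\<integral>D. h D \<partial>P)))) \<partial>P) \<le> ennreal (exp (l\<^sup>2 * real n * c\<^sup>2 / 8))"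
    unfolding P_def by (rule Suc.IH[of h, OF hm[unfolded P_def] hB[unfolded P_def] hc[unfolded P_def]])
  have gint: "integrable Q g"
    by (rule Q.integrable_const_bound[where B=B]) (auto intro!: AE_I2 gB)
  have Eg: "(\<integral>D. g D \<partial>Q) = (\<integral>D. h D \<partial>P)"
    unfolding Q_def P_def h_def by (rule PS.product_integral_insert) (use gint Q_def in auto)
  define E where "E = (\<integral>D. h D \<partial>P)"
  have hoeff: "(\<integral>\<^sup>+z. ennreal (exp (l * (g (D(n:=z)) - h D))) \<partial>M) \<le> ennreal (exp (l\<^sup>2 * c\<^sup>2 / 8))"
    if D: "D \<in> space P" for D
  proof -
    define m where "m = (INF z\<in>space M. g (D(n:=z)))"
    have ne: "space M \<noteq> {}" by (simp add: Mp.not_empty)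
    have bdd: "bdd_below ((\<lambda>z. g (D(n:=z))) ` space M)"
      by (rule bdd_belowI[where m="-B"]) (auto dest: gB[OF ins[OF D]])
    have int: "g (D(n:=z)) \<in> {m..m+c}" if z: "z \<in> space M" for z
    proof -
      have A: "m \<le> g (D(n:=z))" unfolding m_def by (rule cINF_lower[OF bdd z])
      have "g (D(n:=z)) - c \<le> m" unfolding m_def
      proof (rule cINF_greatest[OF ne])
        fix z' assume z': "z' \<in> space M"
        have "\<bar>g ((D(n:=z'))(n:=z)) - g (D(n:=z'))\<bar> \<le> c" using gc[OF ins[OF D z'], of n z] z by simp
        then show "g (D(n:=z)) - c \<le> g (D(n:=z'))" by simp
      qed
      then show ?thesis using A by simp
    qed
    interpret ib: interval_bounded_random_variable M "\<lambda>z. g (D(n:=z))" m "m+c"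
      by unfold_locales (rule comp_meas[OF D], rule AE_I2, rule int)
    have "(\<integral>\<^sup>+z. ennreal (exp (l * (g (D(n:=z)) - Mp.expectation (\<lambda>z. g (D(n:=z)))))) \<partial>M)
        \<le> ennreal (exp (l\<^sup>2 * (m + c - m)\<^sup>2 / 8))"
      by (rule ib.Hoeffdings_lemma_nn_integral[OF l])
    then show ?thesis by (simp add: h_def)
  qed
  have "(\<integral>\<^sup>+D. ennreal (exp (l * (g D - (\<integral>D. g D \<partial>Q)))) \<partial>Q)
      = (\<integral>\<^sup>+D. (\<integral>\<^sup>+z. ennreal (exp (l * (g (D(n:=z)) - E))) \<partial>M) \<partial>P)"
  proof -
    have "(\<integral>\<^sup>+D. ennreal (exp (l * (g D - E))) \<partial>Q)
      = (\<integral>\<^sup>+D. (\<integral>\<^sup>+z. ennreal (exp (l * (g (D(n:=z)) - E))) \<partial>M) \<partial>P)"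
      unfolding Q_def P_def by (rule PS.product_nn_integral_insert) (use gm Q_def in auto)
    then show ?thesis using Eg E_def by simp
  qed
  also have "\<dots> = (\<integral>\<^sup>+D. ennreal (exp (l * (h D - E))) * (\<integral>\<^sup>+z. ennreal (exp (l * (g (D(n:=z)) - h D))) \<partial>M) \<partial>P)"
  proof (rule nn_integral_cong)
    fix D assume D: "D \<in> space P"
    have "(\<integral>\<^sup>+z. ennreal (exp (l * (g (D(n:=z)) - E))) \<partial>M)
        = (\<integral>\<^sup>+z. ennreal (exp (l * (h D - E))) * ennreal (exp (l * (g (D(n:=z)) - h D))) \<partial>M)"
      by (rule nn_integral_cong) (simp add: ennreal_mult[symmetric] exp_add[symmetric] algebra_simps)
    also have "\<dots> = ennreal (exp (l * (h D - E))) * (\<integral>\<^sup>+z. ennreal (exp (l * (g (D(n:=z)) - h D))) \<partial>M)"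
      by (rule nn_integral_cmult) (use comp_meas[OF D] in measurable)
    finally show "(\<integral>\<^sup>+z. ennreal (exp (l * (g (D(n:=z)) - E))) \<partial>M)
        = ennreal (exp (l * (h D - E))) * (\<integral>\<^sup>+z. ennreal (exp (l * (g (D(n:=z)) - h D))) \<partial>M)" .
  qed
  also have "\<dots> \<le> (\<integral>\<^sup>+D. ennreal (exp (l * (h D - E))) * ennreal (exp (l\<^sup>2 * c\<^sup>2 / 8)) \<partial>P)"
    by (rule nn_integral_mono) (auto intro!: mult_left_mono hoeff)
  also have "\<dots> = (\<integral>\<^sup>+D. ennreal (exp (l * (h D - E))) \<partial>P) * ennreal (exp (l\<^sup>2 * c\<^sup>2 / 8))"
    by (rule nn_integral_multc) measurable
  also have "\<dots> \<le> ennreal (exp (l\<^sup>2 * real n * c\<^sup>2 / 8)) * ennreal (exp (l\<^sup>2 * c\<^sup>2 / 8))"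
    using IH unfolding E_def by (rule mult_right_mono) simp
  also have "\<dots> = ennreal (exp (l\<^sup>2 * real (Suc n) * c\<^sup>2 / 8))"
    by (simp add: ennreal_mult[symmetric] exp_add[symmetric] algebra_simps add_divide_distrib)
  finally show ?case using QS by simp
qed

lemma mcdiarmid_tail:
  fixes M :: "'z measure" and c t :: real
  assumes M: "prob_space M" and n: "n > 0" and c: "c > 0" and t: "t > 0"
    and gm: "g \<in> borel_measurable (PiM {..<n} (\<lambda>_. M))"
    and gB: "\<forall>D\<in>space (PiM {..<n} (\<lambda>_. M)). \<bar>g D\<bar> \<le> B"
    and gc: "\<forall>D\<in>space (PiM {..<n} (\<lambda>_. M)). \<forall>i<n. \<forall>z\<in>space M. \<bar>g (D(i:=z)) - g D\<bar> \<le> c"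
  shows "measure (PiM {..<n} (\<lambda>_. M)) {D \<in> space (PiM {..<n} (\<lambda>_. M)). g D \<ge> (\<integral>D. g D \<partial>PiM {..<n} (\<lambda>_. M)) + t}
     \<le> exp (-2 * t\<^sup>2 / (real n * c\<^sup>2))"
proof -
  define P where "P = PiM {..<n} (\<lambda>_. M)"
  interpret P: prob_space P unfolding P_def by (intro prob_space_PiM M)
  define E where "E = (\<integral>D. g D \<partial>P)"
  define l where "l = 4 * t / (real n * c\<^sup>2)"
  have l: "l > 0" using n c t by (simp add: l_def)
  have gm': "g \<in> borel_measurable P" using gm P_def by simp
  have "emeasure P {x \<in> space P. g x - E \<ge> t}
      \<le> ennreal (exp (-l * t)) * (\<integral>\<^sup>+x. ennreal (exp (l * (g x - E))) * indicator (space P) x \<partial>P)"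
    by (rule Chernoff_ineq_nn_integral_ge[OF l]) (use gm' in auto)
  also have "(\<integral>\<^sup>+x. ennreal (exp (l * (g x - E))) * indicator (space P) x \<partial>P)
      = (\<integral>\<^sup>+x. ennreal (exp (l * (g x - E))) \<partial>P)"
    by (rule nn_integral_cong) simp
  also have "\<dots> \<le> ennreal (exp (l\<^sup>2 * real n * c\<^sup>2 / 8))"
    unfolding E_def P_def by (rule mcdiarmid_mgf[OF M l gm gB gc])
  finally have "emeasure P {x \<in> space P. g x - E \<ge> t}
      \<le> ennreal (exp (-l * t)) * ennreal (exp (l\<^sup>2 * real n * c\<^sup>2 / 8))"
    by (simp add: mult_left_mono)
  also have "\<dots> = ennreal (exp (-2 * t\<^sup>2 / (real n * c\<^sup>2)))"
  proof -
    have "-l * t + l\<^sup>2 * real n * c\<^sup>2 / 8 = -2 * t\<^sup>2 / (real n * c\<^sup>2)"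
      using n c by (simp add: l_def field_simps power2_eq_square)
    then show ?thesis by (simp add: ennreal_mult[symmetric] exp_add[symmetric])
  qed
  finally have "measure P {x \<in> space P. g x - E \<ge> t} \<le> exp (-2 * t\<^sup>2 / (real n * c\<^sup>2))"
    by (simp add: P.emeasure_eq_measure)
  moreover have "{x \<in> space P. g x - E \<ge> t} = {x \<in> space P. g x \<ge> E + t}" by auto
  ultimately show ?thesis by (simp add: P_def E_def)
qed

lemma mcdiarmid_conc:
  fixes M :: "'z measure" and \<delta> :: real
  assumes M: "prob_space M" and n: "n > 0" and \<delta>: "0 < \<delta>" "\<delta> < 1"
    and gm: "g \<in> borel_measurable (PiM {..<n} (\<lambda>_. M))"
    and gB: "\<forall>D\<in>space (PiM {..<n} (\<lambda>_. M)). \<bar>g D\<bar> \<le> B"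
    and gc: "\<forall>D\<in>space (PiM {..<n} (\<lambda>_. M)). \<forall>i<n. \<forall>z\<in>space M. \<bar>g (D(i:=z)) - g D\<bar> \<le> 2 / real n"
  shows "measure (PiM {..<n} (\<lambda>_. M)) {D \<in> space (PiM {..<n} (\<lambda>_. M)).
     g D \<le> (\<integral>D. g D \<partial>PiM {..<n} (\<lambda>_. M)) + sqrt (2 / real n * ln (1 / \<delta>))} \<ge> 1 - \<delta>"
proof -
  define P where "P = PiM {..<n} (\<lambda>_. M)"
  interpret P: prob_space P unfolding P_def by (intro prob_space_PiM M)
  define E where "E = (\<integral>D. g D \<partial>P)"
  define L where "L = ln (1 / \<delta>)"
  have L: "L > 0" using \<delta> by (simp add: L_def)
  define t where "t = sqrt (2 / real n * L)"
  have t: "t > 0" using n L by (simp add: t_def)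
  have t2: "t\<^sup>2 = 2 / real n * L" using n L by (simp add: t_def)
  have gm': "g \<in> borel_measurable P" using gm P_def by simp
  define S where "S = {D \<in> space P. g D \<ge> E + t}"
  have S: "S \<in> sets P" unfolding S_def using gm' by measurable
  have "measure P S \<le> exp (-2 * t\<^sup>2 / (real n * (2 / real n)\<^sup>2))"
    unfolding S_def E_def P_def
    by (rule mcdiarmid_tail[OF M n _ t gm gB gc]) (use n in simp)
  also have "-2 * t\<^sup>2 / (real n * (2 / real n)\<^sup>2) = - L"
    using n t2 by (simp add: field_simps power2_eq_square)
  also have "exp (- L) = \<delta>" using \<delta> by (simp add: L_def ln_div)
  finally have mS: "measure P S \<le> \<delta>" .
  have T: "{D \<in> space P. g D \<le> E + t} \<in> sets P" using gm' by measurable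
  have "1 - \<delta> \<le> measure P (space P - S)" using P.prob_compl[OF S] mS by simp
  also have "\<dots> \<le> measure P {D \<in> space P. g D \<le> E + t}"
    by (rule P.finite_measure_mono) (use T S_def in auto)
  finally show ?thesis by (simp add: P_def E_def t_def L_def)
qed

lemma SUP_diff_le:
  fixes a b :: "'f \<Rightarrow> real"
  assumes "A \<noteq> {}" "bdd_above (a ` A)" "bdd_above (b ` A)" "\<forall>x\<in>A. \<bar>a x - b x\<bar> \<le> c"
  shows "\<bar>(SUP x\<in>A. a x) - (SUP x\<in>A. b x)\<bar> \<le> c"
proof -
  have "(SUP x\<in>A. a x) \<le> (SUP x\<in>A. b x) + c"
  proof (rule cSUP_least[OF assms(1)])
    fix x assume x: "x \<in> A"
    have "b x \<le> (SUP x\<in>A. b x)" by (rule cSUP_upper[OF x assms(3)])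
    then show "a x \<le> (SUP x\<in>A. b x) + c" using assms(4) x by force
  qed
  moreover have "(SUP x\<in>A. b x) \<le> (SUP x\<in>A. a x) + c"
  proof (rule cSUP_least[OF assms(1)])
    fix x assume x: "x \<in> A"
    have "a x \<le> (SUP x\<in>A. a x)" by (rule cSUP_upper[OF x assms(2)])
    then show "b x \<le> (SUP x\<in>A. a x) + c" using assms(4) x by force
  qed
  ultimately show ?thesis by simp
qed

theorem theorem7:
  fixes M :: "'z measure" and F :: "'f set" and l :: "'f \<Rightarrow> 'z \<Rightarrow> real"
    and n :: nat and Gap :: "'f set \<Rightarrow> real" and fhat :: "(nat \<Rightarrow> 'z) \<Rightarrow> 'f"
    and \<alpha> \<nu> :: real
  assumes "prob_space M"
    and "n > 0"
    and "0 < \<alpha>" and "\<alpha> < 1" and "0 < \<nu>" and "\<nu> < \<alpha>"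
    and loss_meas: "\<forall>f\<in>F. l f \<in> borel_measurable M"
    and loss_bdd: "\<forall>f\<in>F. \<forall>z\<in>space M. \<bar>l f z\<bar> \<le> 1"
    and sup_meas: "\<forall>F'. F' \<subseteq> F \<and> F' \<noteq> {} \<longrightarrow>
        (\<lambda>D. SUP f\<in>F'. \<bar>pop_risk M l f - emp_risk n l f D\<bar>) \<in> borel_measurable (sample_space n M)"
    and gap_bound: "\<forall>F'. F' \<subseteq> F \<and> F' \<noteq> {} \<longrightarrow>
        (\<integral>D. (SUP f\<in>F'. \<bar>pop_risk M l f - emp_risk n l f D\<bar>) \<partial>(sample_space n M)) \<le> Gap F'"
    and gap_mono: "\<forall>F1 F2. F1 \<subseteq> F2 \<and> F2 \<subseteq> F \<longrightarrow> Gap F1 \<le> Gap F2"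
    and erm: "\<forall>D\<in>space (sample_space n M). fhat D \<in> F \<and>
        (\<forall>f\<in>F. emp_risk n l (fhat D) D \<le> emp_risk n l f D)"
  shows "\<exists>A\<in>sets (sample_space n M).
     A \<subseteq> {D \<in> space (sample_space n M).
        pop_risk M l (fhat D) \<le> emp_risk n l (fhat D) D + Gap (Fplus n l F Gap \<nu> (fhat D) D)
          + sqrt (2 / real n * ln (1 / (\<alpha> - \<nu>)))}
     \<and> measure (sample_space n M) A \<ge> 1 - \<alpha>"
proof -
  note M = assms(1) and n = assms(2)
  interpret Mp: prob_space M by (fact M)
  define P where "P = sample_space n M"
  interpret P: prob_space P unfolding P_def by (intro prob_space_PiM M)
  define R where "R f = pop_risk M l f" for f
  define Rn where "Rn f D = emp_risk n l f D" for f D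
  define gs where "gs F' D = (SUP f\<in>F'. \<bar>R f - Rn f D\<bar>)" for F' D
  have Rb: "\<bar>R f\<bar> \<le> 1" if f: "f \<in> F" for f
  proof -
    have int: "integrable M (l f)"
      by (rule Mp.integrable_const_bound[where B=1]) (use f loss_bdd loss_meas in \<open>auto intro!: AE_I2\<close>)
    have "R f \<le> 1" unfolding R_def pop_risk_def
      by (rule Mp.integral_le_const[OF int]) (use f loss_bdd in \<open>auto intro!: AE_I2 dest: abs_le_D1\<close>)
    moreover have "-1 \<le> R f" unfolding R_def pop_risk_def
      by (rule Mp.integral_ge_const[OF int]) (use f loss_bdd in \<open>force intro!: AE_I2\<close>)
    ultimately show ?thesis by simp
  qed
  have Dsp: "D i \<in> space M" if "D \<in> space P" "i < n" for D i
    using that by (auto simp: P_def space_PiM PiE_def)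
  have Rnb: "\<bar>Rn f D\<bar> \<le> 1" if f: "f \<in> F" and D: "D \<in> space P" for f D
  proof -
    have "\<bar>\<Sum>i<n. l f (D i)\<bar> \<le> (\<Sum>i<n. \<bar>l f (D i)\<bar>)" by (rule sum_abs)
    also have "\<dots> \<le> (\<Sum>i<n. 1)" by (rule sum_mono) (use loss_bdd f Dsp[OF D] in auto)
    finally have "\<bar>\<Sum>i<n. l f (D i)\<bar> \<le> real n" by simp
    then show ?thesis using n by (simp add: Rn_def emp_risk_def)
  qed
  have tb: "\<bar>R f - Rn f D\<bar> \<le> 2" if "f \<in> F" "D \<in> space P" for f D
    using Rb[OF that(1)] Rnb[OF that] by linarith
  have Rnd: "\<bar>Rn f (D(i:=z)) - Rn f D\<bar> \<le> 2 / real n"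
    if f: "f \<in> F" and D: "D \<in> space P" and i: "i < n" and z: "z \<in> space M" for f D i z
  proof -
    have "(\<Sum>k<n. l f ((D(i:=z)) k)) - (\<Sum>k<n. l f (D k)) = (\<Sum>k<n. l f ((D(i:=z)) k) - l f (D k))"
      by (simp add: sum_subtractf)
    also have "\<dots> = (\<Sum>k<n. if k = i then l f z - l f (D i) else 0)"
      by (rule sum.cong) auto
    also have "\<dots> = l f z - l f (D i)" using i by simp
    finally have eq: "Rn f (D(i:=z)) - Rn f D = (l f z - l f (D i)) / real n"
      by (simp add: Rn_def emp_risk_def diff_divide_distrib[symmetric])
    have "\<bar>l f z - l f (D i)\<bar> \<le> 2" using loss_bdd f z Dsp[OF D i]
      by (metis abs_triangle_ineq4 add_mono one_add_one order_trans)
    then show ?thesis unfolding eq using n by (simp add: divide_right_mono)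
  qed
  have bdd: "bdd_above ((\<lambda>f. \<bar>R f - Rn f D\<bar>) ` F')" if "F' \<subseteq> F" "D \<in> space P" for F' D
    by (rule bdd_aboveI[where M=2]) (use tb that in auto)
  have gsB: "\<forall>D\<in>space P. \<bar>gs F' D\<bar> \<le> 2" if F': "F' \<subseteq> F" "F' \<noteq> {}" for F'
  proof
    fix D assume D: "D \<in> space P"
    obtain f0 where f0: "f0 \<in> F'" using F' by auto
    have "0 \<le> \<bar>R f0 - Rn f0 D\<bar>" by simp
    also have "\<dots> \<le> gs F' D" unfolding gs_def by (rule cSUP_upper[OF f0 bdd[OF F'(1) D]])
    finally have "0 \<le> gs F' D" .
    moreover have "gs F' D \<le> 2" unfolding gs_def
      by (rule cSUP_least[OF F'(2)]) (use tb F' D in auto)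
    ultimately show "\<bar>gs F' D\<bar> \<le> 2" by simp
  qed
  have gs0: "0 \<le> gs F' D" if F': "F' \<subseteq> F" "F' \<noteq> {}" and D: "D \<in> space P" for F' D
  proof -
    obtain f0 where f0: "f0 \<in> F'" using F' by auto
    have "0 \<le> \<bar>R f0 - Rn f0 D\<bar>" by simp
    also have "\<dots> \<le> gs F' D" unfolding gs_def by (rule cSUP_upper[OF f0 bdd[OF F'(1) D]])
    finally show ?thesis .
  qed
  have gsc: "\<forall>D\<in>space P. \<forall>i<n. \<forall>z\<in>space M. \<bar>gs F' (D(i:=z)) - gs F' D\<bar> \<le> 2 / real n"
    if F': "F' \<subseteq> F" "F' \<noteq> {}" for F'
  proof (intro ballI allI impI)
    fix D i z assume D: "D \<in> space P" and i: "i < n" and z: "z \<in> space M"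
    have Dz: "D(i:=z) \<in> space P" unfolding P_def by (rule upd_in_space) (use D i z P_def in auto)
    show "\<bar>gs F' (D(i:=z)) - gs F' D\<bar> \<le> 2 / real n" unfolding gs_def
    proof (rule SUP_diff_le[OF F'(2) bdd[OF F'(1) Dz] bdd[OF F'(1) D]], intro ballI)
      fix f assume f: "f \<in> F'"
      have "\<bar>\<bar>R f - Rn f (D(i:=z))\<bar> - \<bar>R f - Rn f D\<bar>\<bar> \<le> \<bar>Rn f (D(i:=z)) - Rn f D\<bar>" by linarith
      also have "\<dots> \<le> 2 / real n" using Rnd f F' D i z by auto
      finally show "\<bar>\<bar>R f - Rn f (D(i:=z))\<bar> - \<bar>R f - Rn f D\<bar>\<bar> \<le> 2 / real n" .
    qed
  qed
  have gsm: "gs F' \<in> borel_measurable P" if "F' \<subseteq> F" "F' \<noteq> {}" for F'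
    using sup_meas that unfolding gs_def R_def Rn_def P_def by blast
  have gsE: "(\<integral>D. gs F' D \<partial>P) \<le> Gap F'" if "F' \<subseteq> F" "F' \<noteq> {}" for F'
    using gap_bound that unfolding gs_def R_def Rn_def P_def by blast
  define Ev where "Ev F' \<delta> = {D \<in> space P. gs F' D \<le> Gap F' + sqrt (2 / real n * ln (1 / \<delta>))}" for F' \<delta>
  have Ev_sets: "Ev F' \<delta> \<in> sets P" if "F' \<subseteq> F" "F' \<noteq> {}" for F' \<delta>
    unfolding Ev_def using gsm[OF that] by measurable
  have Ev_meas: "measure P (Ev F' \<delta>) \<ge> 1 - \<delta>" if F': "F' \<subseteq> F" "F' \<noteq> {}" and \<delta>: "0 < \<delta>" "\<delta> < 1" for F' \<delta>
  proof -
    have "1 - \<delta> \<le> measure P {D \<in> space P. gs F' D \<le> (\<integral>D. gs F' D \<partial>P) + sqrt (2 / real n * ln (1 / \<delta>))}"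
      using mcdiarmid_conc[OF M n \<delta> gsm[OF F', unfolded P_def] gsB[OF F', unfolded P_def] gsc[OF F', unfolded P_def]]
      unfolding P_def by simp
    also have "\<dots> \<le> measure P (Ev F' \<delta>)"
      by (rule P.finite_measure_mono[OF _ Ev_sets[OF F']]) (use gsE[OF F'] in \<open>auto simp: Ev_def\<close>)
    finally show ?thesis .
  qed
  obtain D0 where D0: "D0 \<in> space P" using P.not_empty by auto
  have Fne: "F \<noteq> {}" using erm D0 P_def by auto
  define \<epsilon> where "\<epsilon> = sqrt (2 / real n * ln (1 / \<nu>))"
  have \<epsilon>: "\<epsilon> > 0" using n assms(5,6,4) by (simp add: \<epsilon>_def)
  define G where "G = Gap F"
  have G: "G \<ge> 0"
  proof -
    have "0 \<le> (\<integral>D. gs F D \<partial>P)" by (rule integral_nonneg_AE) (auto intro!: AE_I2 gs0 Fne)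
    then show ?thesis using gsE[OF order_refl Fne] G_def by simp
  qed
  define r where "r = (INF f\<in>F. R f)"
  have bddR: "bdd_below (R ` F)" by (rule bdd_belowI[where m="-1"]) (use Rb in \<open>force dest: abs_le_D2\<close>)
  define F0 where "F0 = {f \<in> F. R f \<le> r + 2 * (G + \<epsilon>)}"
  have F0F: "F0 \<subseteq> F" by (auto simp: F0_def)
  have F0ne: "F0 \<noteq> {}"
  proof -
    have "r < r + 2 * (G + \<epsilon>)" using G \<epsilon> by simp
    then have "\<exists>x\<in>F. R x < r + 2 * (G + \<epsilon>)"
      using cINF_less_iff[OF Fne bddR, of "r + 2 * (G + \<epsilon>)"] unfolding r_def by blast
    then obtain f where "f \<in> F" "R f < r + 2 * (G + \<epsilon>)" by blast
    then show ?thesis by (auto simp: F0_def)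
  qed
  define A where "A = Ev F \<nu> \<inter> Ev F0 (\<alpha> - \<nu>)"
  have E1: "Ev F \<nu> \<in> sets P" by (rule Ev_sets[OF order_refl Fne])
  have E2: "Ev F0 (\<alpha> - \<nu>) \<in> sets P" by (rule Ev_sets[OF F0F F0ne])
  have Asets: "A \<in> sets P" using E1 E2 by (simp add: A_def)
  have mA: "measure P A \<ge> 1 - \<alpha>"
  proof -
    have m1: "measure P (Ev F \<nu>) \<ge> 1 - \<nu>" by (rule Ev_meas[OF order_refl Fne]) (use assms in auto)
    have m2: "measure P (Ev F0 (\<alpha> - \<nu>)) \<ge> 1 - (\<alpha> - \<nu>)" by (rule Ev_meas[OF F0F F0ne]) (use assms in auto)
    have "space P - A = (space P - Ev F \<nu>) \<union> (space P - Ev F0 (\<alpha> - \<nu>))" by (auto simp: A_def)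
    then have "measure P (space P - A) \<le> measure P (space P - Ev F \<nu>) + measure P (space P - Ev F0 (\<alpha> - \<nu>))"
      using measure_Un_le[of "space P - Ev F \<nu>" P "space P - Ev F0 (\<alpha> - \<nu>)"] E1 E2 by auto
    then show ?thesis using P.prob_compl[OF Asets] P.prob_compl[OF E1] P.prob_compl[OF E2] m1 m2 by simp
  qed
  have Asub: "A \<subseteq> {D \<in> space P.
        R (fhat D) \<le> Rn (fhat D) D + Gap (Fplus n l F Gap \<nu> (fhat D) D)
          + sqrt (2 / real n * ln (1 / (\<alpha> - \<nu>)))}"
  proof
    fix D assume DA: "D \<in> A"
    then have D: "D \<in> space P" by (auto simp: A_def Ev_def)
    have g1: "gs F D \<le> G + \<epsilon>" using DA by (auto simp: A_def Ev_def G_def \<epsilon>_def)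
    have g2: "gs F0 D \<le> Gap F0 + sqrt (2 / real n * ln (1 / (\<alpha> - \<nu>)))" using DA by (auto simp: A_def Ev_def)
    define fh where "fh = fhat D"
    have fh: "fh \<in> F" and fhmin: "\<And>f. f \<in> F \<Longrightarrow> Rn fh D \<le> Rn f D"
      using erm D unfolding fh_def P_def Rn_def by auto
    have dev: "\<bar>R f - Rn f D\<bar> \<le> G + \<epsilon>" if "f \<in> F" for f
    proof -
      have "\<bar>R f - Rn f D\<bar> \<le> gs F D" unfolding gs_def by (rule cSUP_upper[OF that bdd[OF order_refl D]])
      then show ?thesis using g1 by simp
    qed
    have "R fh - 2 * (G + \<epsilon>) \<le> r" unfolding r_def
    proof (rule cINF_greatest[OF Fne])
      fix f assume f: "f \<in> F"
      show "R fh - 2 * (G + \<epsilon>) \<le> R f" using dev[OF f] dev[OF fh] fhmin[OF f] by (smt (verit))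
    qed
    then have fhF0: "fh \<in> F0" using fh by (auto simp: F0_def)
    have F0sub: "F0 \<subseteq> Fplus n l F Gap \<nu> fh D"
    proof
      fix f assume f: "f \<in> F0"
      then have fF: "f \<in> F" and Rf: "R f \<le> r + 2 * (G + \<epsilon>)" by (auto simp: F0_def)
      have "r \<le> R fh" unfolding r_def by (rule cINF_lower[OF bddR fh])
      then have "Rn f D \<le> Rn fh D + 4 * G + 4 * \<epsilon>" using dev[OF fF] dev[OF fh] Rf by (smt (verit))
      then show "f \<in> Fplus n l F Gap \<nu> fh D"
        using fF by (simp add: Fplus_def Rn_def G_def \<epsilon>_def)
    qed
    have "Fplus n l F Gap \<nu> fh D \<subseteq> F" by (auto simp: Fplus_def)
    then have gm: "Gap F0 \<le> Gap (Fplus n l F Gap \<nu> fh D)" using gap_mono F0sub by blast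
    have "\<bar>R fh - Rn fh D\<bar> \<le> gs F0 D" unfolding gs_def by (rule cSUP_upper[OF fhF0 bdd[OF F0F D]])
    then show "D \<in> {D \<in> space P.
        R (fhat D) \<le> Rn (fhat D) D + Gap (Fplus n l F Gap \<nu> (fhat D) D)
          + sqrt (2 / real n * ln (1 / (\<alpha> - \<nu>)))}"
      using D g2 gm unfolding fh_def by auto
  qed
  show ?thesis
    using Asets Asub mA unfolding P_def R_def Rn_def by blast
qed

end
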